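(* Let $F$ be a minimally unsatisfiable clause-set with $\mathrm{singind}(F)=1$. 1. If $F$ has at least two singular variables, then: (a) every singular variable of $F$ is non-1-singular; (b) there is a clause $C\in F$ containing every singular literal of $F$; (c) if $F$ is eventually saturated, then $F$ has exactly two singular variables. 2. If $F$ is eventually saturated, then any two elements of $\mathrm{sDP}(F)$ are isomorphic.
   Context: Literals are variables $v$ and complements $\overline{v}$; a clause is a finite set of literals with no complementary pair; a clause-set is a finite set of clauses; $\mathrm{var}(F)$ is the set of variables of $F$; $\mathrm{ldeg}_F(x)$ is the number of clauses of $F$ containing literal $x$. $\mathrm{DP}_v(F) := \{C \in F : v \notin \mathrm{var}(C)\} \cup \{(C \cup D)\setminus\{v,\overline{v}\} : C, D \in F,\ C \cap \overline{D} = \{v\}\}$; $\mathrm{DP}_{v_1,\dots,v_k}(F)$ applies these in order. A variable $v$ is singular for $F$ if $\min(\mathrm{ldeg}_F(v),\mathrm{ldeg}_F(\overline{v}))=1$; 1-singular if $\mathrm{ldeg}_F(v)=\mathrm{ldeg}_F(\overline{v})=1$; non-1-singular if singular but not 1-singular; a singular literal is a literal $x$ of a singular variable with $\mathrm{ldeg}_F(x)=1$; $F$ is nonsingular if it has no singular variables. For minimally unsatisfiable $F$, a tuple $(v_1,\dots,v_n)$ is singular if each $v_i$ is singular for $\mathrm{DP}_{v_1,\dots,v_{i-1}}(F)$, and maximal if $\mathrm{DP}_{v_1,\dots,v_n}(F)$ is nonsingular; $\mathrm{singind}(F)$ is the minimal length of a maximal singular tuple. $\mathrm{sDP}(F)$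 is the set of nonsingular minimally unsatisfiable clause-sets obtainable from $F$ by zero or more steps $G\leadsto\mathrm{DP}_v(G)$ with $v$ singular for $G$. A minimally unsatisfiable $G$ is saturated if for every $C\in G$ and literal $y$ with $\mathrm{var}(y)\in\mathrm{var}(G)\setminus\mathrm{var}(C)$, $(G\setminus\{C\})\cup\{C\cup\{y\}\}$ is satisfiable; $F$ is eventually saturated if every element of $\mathrm{sDP}(F)$ is saturated. Clause-sets are isomorphic if a complement-preserving bijection on literals maps the clauses of one exactly onto the clauses of the other. *)

theory Defs
  imports Main
begin

datatype 'v lit = Pos 'v | Neg 'v

fun comp :: "'v lit \<Rightarrow> 'v lit" where
  "comp (Pos v) = Neg v" | "comp (Neg v) = Pos v"

fun lvar :: "'v lit \<Rightarrow> 'v" where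
  "lvar (Pos v) = v" | "lvar (Neg v) = v"

type_synonym 'v clause = "'v lit set"
type_synonym 'v cls = "'v clause set"

definition is_clause :: "'v clause \<Rightarrow> bool" where
  "is_clause C \<longleftrightarrow> finite C \<and> (\<forall>x\<in>C. comp x \<notin> C)"

definition is_clause_set :: "'v cls \<Rightarrow> bool" where
  "is_clause_set F \<longleftrightarrow> finite F \<and> (\<forall>C\<in>F. is_clause C)"

definition var_cl :: "'v clause \<Rightarrow> 'v set" where
  "var_cl C = lvar ` C"

definition vars :: "'v cls \<Rightarrow> 'v set" where
  "vars F = (\<Union>C\<in>F. var_cl C)"

definition ldeg :: "'v cls \<Rightarrow> 'v lit \<Rightarrow> nat" where
  "ldeg F x = card {C\<in>F. x \<in> C}"

fun lit_val :: "('v \<Rightarrow> bool) \<Rightarrow> 'v lit \<Rightarrow> bool" where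
  "lit_val \<phi> (Pos v) = \<phi> v" | "lit_val \<phi> (Neg v) = (\<not> \<phi> v)"

definition satisfiable :: "'v cls \<Rightarrow> bool" where
  "satisfiable F \<longleftrightarrow> (\<exists>\<phi>. \<forall>C\<in>F. \<exists>x\<in>C. lit_val \<phi> x)"

definition MU :: "'v cls \<Rightarrow> bool" where
  "MU F \<longleftrightarrow> is_clause_set F \<and> \<not> satisfiable F \<and> (\<forall>C\<in>F. satisfiable (F - {C}))"

definition DP :: "'v \<Rightarrow> 'v cls \<Rightarrow> 'v cls" where
  "DP v F = {C\<in>F. v \<notin> var_cl C} \<union>
     {(C \<union> D) - {Pos v, Neg v} | C D. C \<in> F \<and> D \<in> F \<and> C \<inter> comp ` D = {Pos v}}"

definition DPs :: "'v list \<Rightarrow> 'v cls \<Rightarrow> 'v cls" where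
  "DPs vs F = foldl (\<lambda>G v. DP v G) F vs"

definition singular :: "'v cls \<Rightarrow> 'v \<Rightarrow> bool" where
  "singular F v \<longleftrightarrow> min (ldeg F (Pos v)) (ldeg F (Neg v)) = 1"

definition one_singular :: "'v cls \<Rightarrow> 'v \<Rightarrow> bool" where
  "one_singular F v \<longleftrightarrow> ldeg F (Pos v) = 1 \<and> ldeg F (Neg v) = 1"

definition non_one_singular :: "'v cls \<Rightarrow> 'v \<Rightarrow> bool" where
  "non_one_singular F v \<longleftrightarrow> singular F v \<and> \<not> one_singular F v"

definition singular_lit :: "'v cls \<Rightarrow> 'v lit \<Rightarrow> bool" where
  "singular_lit F x \<longleftrightarrow> singular F (lvar x) \<and> ldeg F x = 1"

definition singular_vars :: "'v cls \<Rightarrow> 'v set" where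
  "singular_vars F = {v. singular F v}"

definition nonsingular :: "'v cls \<Rightarrow> bool" where
  "nonsingular F \<longleftrightarrow> (\<forall>v. \<not> singular F v)"

fun singular_tuple :: "'v cls \<Rightarrow> 'v list \<Rightarrow> bool" where
  "singular_tuple F [] = True"
| "singular_tuple F (v # vs) = (singular F v \<and> singular_tuple (DP v F) vs)"

definition maximal_singular_tuple :: "'v cls \<Rightarrow> 'v list \<Rightarrow> bool" where
  "maximal_singular_tuple F vs \<longleftrightarrow> singular_tuple F vs \<and> nonsingular (DPs vs F)"

definition singind :: "'v cls \<Rightarrow> nat" where
  "singind F = (LEAST n. \<exists>vs. length vs = n \<and> maximal_singular_tuple F vs)"

inductive sdp_reach :: "'v cls \<Rightarrow> 'v cls \<Rightarrow> bool" where
  refl: "sdp_reach F F"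
| step: "sdp_reach F G \<Longrightarrow> singular G v \<Longrightarrow> sdp_reach F (DP v G)"

definition sDP :: "'v cls \<Rightarrow> 'v cls set" where
  "sDP F = {G. sdp_reach F G \<and> MU G \<and> nonsingular G}"

definition saturated :: "'v cls \<Rightarrow> bool" where
  "saturated G \<longleftrightarrow> MU G \<and>
     (\<forall>C\<in>G. \<forall>y. lvar y \<in> vars G - var_cl C \<longrightarrow> satisfiable ((G - {C}) \<union> {C \<union> {y}}))"

definition eventually_saturated :: "'v cls \<Rightarrow> bool" where
  "eventually_saturated F \<longleftrightarrow> (\<forall>G\<in>sDP F. saturated G)"

definition isomorphic :: "'v cls \<Rightarrow> 'w cls \<Rightarrow> bool" where
  "isomorphic F G \<longleftrightarrow> (\<exists>f :: 'v lit \<Rightarrow> 'w lit. bij f \<and> (\<forall>x. f (comp x) = comp (f x))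
      \<and> (\<lambda>C. f ` C) ` F = G)"

end

theory Submission
  imports Defs
begin


lemma comp_comp[simp]: "comp (comp x) = x" by (cases x) auto
lemma comp_neq[simp]: "comp x \<noteq> x" by (cases x) auto
lemma comp_neq2[simp]: "x \<noteq> comp x" by (cases x) auto
lemma lvar_comp[simp]: "lvar (comp x) = lvar x" by (cases x) auto
lemma comp_inj[simp]: "comp x = comp y \<longleftrightarrow> x = y" by (metis comp_comp)
lemma lvar_eq: "lvar y = lvar x \<Longrightarrow> y = x \<or> y = comp x" by (cases x; cases y) auto
lemma lit_val_comp[simp]: "lit_val \<phi> (comp x) = (\<not> lit_val \<phi> x)" by (cases x) auto
lemma mem_vlits[simp]: "x \<in> {Pos v, Neg v} \<longleftrightarrow> lvar x = v" by (cases x) auto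
lemma var_cl_iff: "v \<in> var_cl C \<longleftrightarrow> (\<exists>x\<in>C. lvar x = v)" by (auto simp: var_cl_def)
lemma comp_img: "x \<in> comp ` D \<longleftrightarrow> comp x \<in> D" by (metis comp_comp image_iff)

definition settrue :: "('v \<Rightarrow> bool) \<Rightarrow> 'v lit \<Rightarrow> ('v \<Rightarrow> bool)" where
  "settrue \<phi> x = \<phi>(lvar x := lit_val (\<lambda>_. True) x)"

lemma lit_val_settrue: "lit_val (settrue \<phi> x) y = (if lvar y = lvar x then y = x else lit_val \<phi> y)"
  by (cases x; cases y) (auto simp: settrue_def)

lemma settrue_self[simp]: "lit_val (settrue \<phi> x) x"
  by (simp add: lit_val_settrue)
lemma settrue_other: "lvar y \<noteq> lvar x \<Longrightarrow> lit_val (settrue \<phi> x) y = lit_val \<phi> y"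
  by (simp add: lit_val_settrue)

lemma satI: "\<forall>E\<in>G. \<exists>x\<in>E. lit_val \<psi> x \<Longrightarrow> satisfiable G"
  unfolding satisfiable_def by blast

lemma MU_clause: "MU F \<Longrightarrow> C \<in> F \<Longrightarrow> x \<in> C \<Longrightarrow> comp x \<notin> C"
  by (auto simp: MU_def is_clause_set_def is_clause_def)
lemma MU_finite: "MU F \<Longrightarrow> finite F" by (auto simp: MU_def is_clause_set_def)
lemma MU_cfinite: "MU F \<Longrightarrow> C \<in> F \<Longrightarrow> finite C" by (auto simp: MU_def is_clause_set_def is_clause_def)
lemma MU_unsat: "MU F \<Longrightarrow> \<not> satisfiable F" by (auto simp: MU_def)

lemma MU_min: assumes "MU F" "C \<in> F"
  obtains \<phi> where "\<forall>D\<in>F. D \<noteq> C \<longrightarrow> (\<exists>x\<in>D. lit_val \<phi> x)" "\<forall>x\<in>C. \<not> lit_val \<phi> x"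
proof -
  from assms obtain \<phi> where p: "\<forall>D\<in>F - {C}. \<exists>x\<in>D. lit_val \<phi> x"
    by (auto simp: MU_def satisfiable_def)
  have "\<forall>x\<in>C. \<not> lit_val \<phi> x"
  proof (rule ccontr)
    assume "\<not> ?thesis"
    then have "satisfiable F" using p unfolding satisfiable_def by blast
    with assms show False by (auto simp: MU_def)
  qed
  with p that show thesis by blast
qed

lemma MU_nopure: assumes mu: "MU F" and C: "C \<in> F" "x \<in> C" shows "\<exists>D\<in>F. comp x \<in> D"
proof (rule ccontr)
  assume no: "\<not> ?thesis"
  obtain \<phi> where p: "\<forall>D\<in>F. D \<noteq> C \<longrightarrow> (\<exists>x\<in>D. lit_val \<phi> x)" using MU_min[OF mu C(1)] by blast
  have "satisfiable F"
  proof (rule satI[of _ "settrue \<phi> x"], intro ballI)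
    fix D assume D: "D \<in> F"
    show "\<exists>y\<in>D. lit_val (settrue \<phi> x) y"
    proof (cases "D = C")
      case True then show ?thesis using C by (auto simp: lit_val_settrue)
    next
      case False
      then obtain y where y: "y \<in> D" "lit_val \<phi> y" using p D by blast
      have "comp x \<notin> D" using no D by blast
      then show ?thesis using y lvar_eq[of y x] by (auto simp: lit_val_settrue)
    qed
  qed
  with mu show False by (simp add: MU_unsat)
qed

lemma single_mem: "{C\<in>F. s \<in> C} = {C0} \<Longrightarrow> C0 \<in> F \<and> s \<in> C0"
  by (metis (no_types, lifting) insertI1 mem_Collect_eq)
lemma single_uniq: "{C\<in>F. s \<in> C} = {C0} \<Longrightarrow> C \<in> F \<Longrightarrow> s \<in> C \<Longrightarrow> C = C0"
  by (metis (no_types, lifting) singletonD mem_Collect_eq)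

lemma MU_res: assumes mu: "MU F" and C0: "{C\<in>F. s \<in> C} = {C0}" and D: "D \<in> F" "comp s \<in> D"
  shows "C0 \<inter> comp ` D = {s}"
proof
  have "s \<in> C0" using single_mem[OF C0] by blast
  then show "{s} \<subseteq> C0 \<inter> comp ` D" using D by (auto simp: comp_img)
next
  show "C0 \<inter> comp ` D \<subseteq> {s}"
  proof
    fix z assume z: "z \<in> C0 \<inter> comp ` D"
    show "z \<in> {s}"
    proof (rule ccontr)
      assume zs: "z \<notin> {s}"
      have C0F: "C0 \<in> F" using single_mem[OF C0] by blast
      obtain \<phi> where p: "\<forall>E\<in>F. E \<noteq> D \<longrightarrow> (\<exists>x\<in>E. lit_val \<phi> x)" and f: "\<forall>x\<in>D. \<not> lit_val \<phi> x"
        using MU_min[OF mu D(1)] by blast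
      let ?\<psi> = "settrue \<phi> (comp s)"
      have "lvar z \<noteq> lvar s"
      proof
        assume "lvar z = lvar s"
        then have "z = comp s" using lvar_eq[of z s] zs by auto
        then have "s \<in> D" using z by (auto simp: comp_img)
        with D MU_clause[OF mu D(1)] show False by simp
      qed
      have zf: "lit_val \<phi> z" using f z by (auto simp: comp_img)
      have "satisfiable F"
      proof (rule satI[of _ ?\<psi>], intro ballI)
        fix E assume E: "E \<in> F"
        show "\<exists>y\<in>E. lit_val ?\<psi> y"
        proof (cases "E = D")
          case True then show ?thesis using D(2) settrue_self by blast
        next
          case False
          show ?thesis
          proof (cases "E = C0")
            case True
            have "lit_val ?\<psi> z" using zf \<open>lvar z \<noteq> lvar s\<close> by (simp add: lit_val_settrue)
            then show ?thesis using z True by (simp only: Int_iff) blast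
          next
            case False
            obtain y where y: "y \<in> E" "lit_val \<phi> y" using p E \<open>E \<noteq> D\<close> by blast
            have "y \<noteq> s" using single_uniq[OF C0 E] y False by blast
            then show ?thesis using y lvar_eq[of y s] by (auto simp: lit_val_settrue)
          qed
        qed
      qed
      with mu show False by (simp add: MU_unsat)
    qed
  qed
qed

lemma DP_char:
  assumes mu: "MU F" and C0: "{C\<in>F. s \<in> C} = {C0}" and sv: "lvar s = v"
  shows "DP v F = {E\<in>F. v \<notin> var_cl E} \<union> (\<lambda>D. (C0 \<union> D) - {Pos v, Neg v}) ` {D\<in>F. comp s \<in> D}"
proof (cases s)
  case (Pos u)
  with sv have s: "s = Pos v" by simp
  show ?thesis unfolding DP_def
  proof (intro equalityI subsetI)
    fix E assume "E \<in> {C \<in> F. v \<notin> var_cl C} \<union> {(C \<union> D) - {Pos v, Neg v} |C D. C \<in> F \<and> D \<in> F \<and> C \<inter> comp ` D = {Pos v}}"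
    then consider "E \<in> F" "v \<notin> var_cl E" | C D where "E = (C \<union> D) - {Pos v, Neg v}" "C\<in>F" "D\<in>F" "C \<inter> comp ` D = {Pos v}" by blast
    then show "E \<in> {E\<in>F. v \<notin> var_cl E} \<union> (\<lambda>D. (C0 \<union> D) - {Pos v, Neg v}) ` {D\<in>F. comp s \<in> D}"
    proof cases
      case 1 then show ?thesis by blast
    next
      case 2
      have "Pos v \<in> C" "Pos v \<in> comp ` D" using 2(4) by auto
      then have "C = C0" "Neg v \<in> D" using single_uniq[OF C0 2(2)] s by (auto simp: comp_img)
      then show ?thesis using 2 s by auto
    qed
  next
    fix E assume "E \<in> {E\<in>F. v \<notin> var_cl E} \<union> (\<lambda>D. (C0 \<union> D) - {Pos v, Neg v}) ` {D\<in>F. comp s \<in> D}"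
    then consider "E \<in> F" "v \<notin> var_cl E" | D where "E = (C0 \<union> D) - {Pos v, Neg v}" "D\<in>F" "comp s \<in> D" by blast
    then show "E \<in> {C \<in> F. v \<notin> var_cl C} \<union> {(C \<union> D) - {Pos v, Neg v} |C D. C \<in> F \<and> D \<in> F \<and> C \<inter> comp ` D = {Pos v}}"
    proof cases
      case 1 then show ?thesis by blast
    next
      case 2
      have "C0 \<inter> comp ` D = {Pos v}" using MU_res[OF mu C0 2(2,3)] s by simp
      moreover have "C0 \<in> F" using single_mem[OF C0] by blast
      ultimately show ?thesis using 2 by blast
    qed
  qed
next
  case (Neg u)
  with sv have s: "s = Neg v" by simp
  show ?thesis unfolding DP_def
  proof (intro equalityI subsetI)
    fix E assume "E \<in> {C \<in> F. v \<notin> var_cl C} \<union> {(C \<union> D) - {Pos v, Neg v} |C D. C \<in> F \<and> D \<in> F \<and> C \<inter> comp ` D = {Pos v}}"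
    then consider "E \<in> F" "v \<notin> var_cl E" | C D where "E = (C \<union> D) - {Pos v, Neg v}" "C\<in>F" "D\<in>F" "C \<inter> comp ` D = {Pos v}" by blast
    then show "E \<in> {E\<in>F. v \<notin> var_cl E} \<union> (\<lambda>D. (C0 \<union> D) - {Pos v, Neg v}) ` {D\<in>F. comp s \<in> D}"
    proof cases
      case 1 then show ?thesis by blast
    next
      case 2
      have "Pos v \<in> C" "Pos v \<in> comp ` D" using 2(4) by auto
      then have "D = C0" using single_uniq[OF C0 2(3)] s by (auto simp: comp_img)
      then have "E = (C0 \<union> C) - {Pos v, Neg v}" using 2(1) by auto
      then show ?thesis using 2 s \<open>Pos v \<in> C\<close> by auto
    qed
  next
    fix E assume "E \<in> {E\<in>F. v \<notin> var_cl E} \<union> (\<lambda>D. (C0 \<union> D) - {Pos v, Neg v}) ` {D\<in>F. comp s \<in> D}"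
    then consider "E \<in> F" "v \<notin> var_cl E" | D where "E = (C0 \<union> D) - {Pos v, Neg v}" "D\<in>F" "comp s \<in> D" by blast
    then show "E \<in> {C \<in> F. v \<notin> var_cl C} \<union> {(C \<union> D) - {Pos v, Neg v} |C D. C \<in> F \<and> D \<in> F \<and> C \<inter> comp ` D = {Pos v}}"
    proof cases
      case 1 then show ?thesis by blast
    next
      case 2
      have r: "C0 \<inter> comp ` D = {Neg v}" using MU_res[OF mu C0 2(2,3)] s by simp
      have "D \<inter> comp ` C0 = {Pos v}"
      proof (intro equalityI subsetI)
        fix x assume "x \<in> D \<inter> comp ` C0"
        then have "comp x \<in> C0 \<inter> comp ` D" by (auto simp: comp_img)
        then have "comp x = Neg v" using r by blast
        then show "x \<in> {Pos v}" by (metis comp.simps(2) comp_comp singletonI)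
      next
        fix x assume "x \<in> {Pos v}"
        then show "x \<in> D \<inter> comp ` C0" using 2(3) s single_mem[OF C0] by (auto simp: comp_img)
      qed
      moreover have "C0 \<in> F" using single_mem[OF C0] by blast
      moreover have "E = (D \<union> C0) - {Pos v, Neg v}" using 2(1) by auto
      ultimately show ?thesis using 2 by blast
    qed
  qed
qed

lemma vars_DP: "vars (DP v F) \<subseteq> vars F - {v}"
proof
  fix u assume "u \<in> vars (DP v F)"
  then obtain E x where E: "E \<in> DP v F" "x \<in> E" "lvar x = u" unfolding vars_def var_cl_def by blast
  from E(1) consider "E \<in> F" "v \<notin> var_cl E" | C D where "E = (C \<union> D) - {Pos v, Neg v}" "C \<in> F" "D \<in> F"
    unfolding DP_def by blast
  then show "u \<in> vars F - {v}"
  proof cases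
    case 1
    have "u \<in> vars F" unfolding vars_def var_cl_def using 1(1) E(2,3) by blast
    moreover have "u \<noteq> v" using 1(2) E(2,3) unfolding var_cl_def by blast
    ultimately show ?thesis by blast
  next
    case 2
    have "x \<notin> {Pos v, Neg v}" using 2(1) E(2) by blast
    then have "u \<noteq> v" using E(3) by (cases x) auto
    moreover have "x \<in> C \<or> x \<in> D" using 2(1) E(2) by blast
    then have "u \<in> vars F" unfolding vars_def var_cl_def using 2(2,3) E(3) by blast
    ultimately show ?thesis by blast
  qed
qed

lemma finite_vars: assumes "MU F" shows "finite (vars F)"
  unfolding vars_def var_cl_def
proof (rule finite_UN_I)
  show "finite F" using MU_finite[OF assms] .
  fix C assume "C \<in> F" then show "finite (lvar ` C)" using MU_cfinite[OF assms] by blast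
qed

lemma ldeg_ge1: assumes "1 \<le> ldeg G x" shows "\<exists>E\<in>G. x \<in> E"
proof (rule ccontr)
  assume "\<not> ?thesis"
  then have "{C\<in>G. x \<in> C} = {}" by blast
  then have "ldeg G x = 0" unfolding ldeg_def by (metis card.empty)
  then show False using assms by simp
qed
lemma ldeg_pos: assumes "finite G" "E \<in> G" "x \<in> E" shows "1 \<le> ldeg G x"
proof -
  have "finite {C\<in>G. x \<in> C}" using assms(1) by simp
  moreover have "E \<in> {C\<in>G. x \<in> C}" using assms by simp
  ultimately have "0 < card {C\<in>G. x \<in> C}" using card_gt_0_iff by blast
  then show ?thesis unfolding ldeg_def by simp
qed
lemma ldeg_le1: assumes "{E\<in>G. x \<in> E} \<subseteq> {e}" shows "ldeg G x \<le> 1"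
proof -
  have "card {E\<in>G. x \<in> E} \<le> card {e}" by (rule card_mono) (use assms in auto)
  then show ?thesis by (simp add: ldeg_def)
qed
lemma ldeg1_uniq: assumes "ldeg G x = 1" shows "\<exists>C0. {C\<in>G. x \<in> C} = {C0}"
proof -
  have "card {C\<in>G. x \<in> C} = 1" using assms by (simp add: ldeg_def)
  then obtain c where "{C\<in>G. x \<in> C} = {c}" by (rule card_1_singletonE)
  then show ?thesis by blast
qed
lemma singular_lit_iff: "singular G (lvar x) \<longleftrightarrow> min (ldeg G x) (ldeg G (comp x)) = 1"
proof (cases x)
  case (Pos v) then show ?thesis by (simp add: singular_def)
next
  case (Neg v) then show ?thesis using min.commute[of "ldeg G (Pos v)" "ldeg G (Neg v)"] by (simp add: singular_def)
qed
lemma singular_ex: assumes "singular F v" shows "\<exists>s. lvar s = v \<and> ldeg F s = 1"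
proof -
  have "ldeg F (Pos v) = 1 \<or> ldeg F (Neg v) = 1" using assms unfolding singular_def
    by (simp add: min_def split: if_splits)
  then show ?thesis
  proof
    assume "ldeg F (Pos v) = 1" then show ?thesis by (intro exI[of _ "Pos v"]) simp
  next
    assume "ldeg F (Neg v) = 1" then show ?thesis by (intro exI[of _ "Neg v"]) simp
  qed
qed

lemma ex_max: "finite (vars F) \<Longrightarrow> \<exists>vs. maximal_singular_tuple F vs"
proof (induction "card (vars F)" arbitrary: F rule: less_induct)
  case less
  show ?case
  proof (cases "nonsingular F")
    case True then show ?thesis unfolding maximal_singular_tuple_def
      by (intro exI[of _ "[]"]) (simp add: DPs_def)
  next
    case False then obtain v where v: "singular F v" by (auto simp: nonsingular_def)
    obtain s where s: "lvar s = v" "ldeg F s = 1" using singular_ex[OF v] by blast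
    then obtain E where "E \<in> F" "s \<in> E" using ldeg_ge1[of F s] by auto
    then have "v \<in> vars F" unfolding vars_def var_cl_def using s(1) by blast
    then have "vars (DP v F) \<subset> vars F" using vars_DP[of v F] by blast
    then have "card (vars (DP v F)) < card (vars F)" "finite (vars (DP v F))"
      using less.prems by (auto intro: psubset_card_mono finite_subset)
    then obtain vs where "maximal_singular_tuple (DP v F) vs" using less.hyps by blast
    then have "maximal_singular_tuple F (v # vs)" using v
      by (simp add: maximal_singular_tuple_def DPs_def)
    then show ?thesis by blast
  qed
qed


lemma res_mem: "x \<in> (A \<union> B) - {Pos v, Neg v} \<longleftrightarrow> (x \<in> A \<or> x \<in> B) \<and> lvar x \<noteq> v"
  by (cases x) auto

lemma min1: "(a::nat) \<le> 1 \<Longrightarrow> 1 \<le> a \<Longrightarrow> 1 \<le> b \<Longrightarrow> min a b = 1" by simp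

locale sing =
  fixes F :: "'v cls" and s :: "'v lit" and C0 :: "'v clause" and v :: 'v
  assumes mu: "MU F" and C0: "{C\<in>F. s \<in> C} = {C0}" and sv: "lvar s = v"
begin

lemma C0F: "C0 \<in> F" and sC0: "s \<in> C0" using single_mem[OF C0] by auto
lemma uniq: "C \<in> F \<Longrightarrow> s \<in> C \<Longrightarrow> C = C0" using single_uniq[OF C0] by blast
lemma dp: "DP v F = {E\<in>F. v \<notin> var_cl E} \<union> (\<lambda>D. (C0 \<union> D) - {Pos v, Neg v}) ` {D\<in>F. comp s \<in> D}"
  using DP_char[OF mu C0 sv] .
lemma res: "D \<in> F \<Longrightarrow> comp s \<in> D \<Longrightarrow> C0 \<inter> comp ` D = {s}" using MU_res[OF mu C0] by blast

lemma dp_cases: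
  assumes "E \<in> DP v F"
  obtains "E \<in> F" "v \<notin> var_cl E" | D where "E = (C0 \<union> D) - {Pos v, Neg v}" "D \<in> F" "comp s \<in> D"
  using assms unfolding dp by blast

lemma dp_in1: "E \<in> F \<Longrightarrow> v \<notin> var_cl E \<Longrightarrow> E \<in> DP v F" unfolding dp by blast
lemma dp_in2: "D \<in> F \<Longrightarrow> comp s \<in> D \<Longrightarrow> (C0 \<union> D) - {Pos v, Neg v} \<in> DP v F" unfolding dp by blast

lemma fin_dp: "finite (DP v F)"
  unfolding dp using MU_finite[OF mu] by auto

lemma v_cases: assumes "v \<in> var_cl E" obtains "s \<in> E" | "comp s \<in> E"
proof -
  obtain z where "z \<in> E" "lvar z = lvar s" using assms sv by (auto simp: var_cl_iff)
  then show ?thesis using lvar_eq[of z s] that by blast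
qed

lemma var_s: "x \<in> E \<Longrightarrow> lvar x = v \<Longrightarrow> v \<in> var_cl E" by (auto simp: var_cl_iff)

lemma occurs: assumes E: "E \<in> F" "y \<in> E" and yv: "lvar y \<noteq> v" shows "\<exists>E'\<in>DP v F. y \<in> E'"
proof (cases "v \<in> var_cl E")
  case False then show ?thesis using dp_in1[OF E(1)] E(2) by blast
next
  case True
  then show ?thesis
  proof (cases rule: v_cases)
    case 1
    then have "E = C0" using uniq[OF E(1)] by simp
    obtain D where D: "D \<in> F" "comp s \<in> D" using MU_nopure[OF mu C0F sC0] by blast
    have "y \<in> (C0 \<union> D) - {Pos v, Neg v}" unfolding res_mem using E(2) yv \<open>E = C0\<close> by simp
    then show ?thesis using dp_in2[OF D] by (rule bexI)
  next
    case 2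
    have "y \<in> (C0 \<union> E) - {Pos v, Neg v}" unfolding res_mem using E(2) yv by simp
    then show ?thesis using dp_in2[OF E(1) 2] by (rule bexI)
  qed
qed

lemma lemmaA:
  assumes xv: "lvar x \<noteq> v" and x1: "ldeg F x = 1" and alt: "x \<notin> C0 \<or> ldeg F (comp s) = 1"
  shows "singular (DP v F) (lvar x)"
proof -
  obtain E0 where E0: "{C\<in>F. x \<in> C} = {E0}" using ldeg1_uniq[OF x1] by blast
  have E0F: "E0 \<in> F" "x \<in> E0" using single_mem[OF E0] by auto
  have up: "\<exists>e. {E\<in>DP v F. x \<in> E} \<subseteq> {e}"
  proof (cases "x \<in> C0")
    case False
    let ?e = "if v \<in> var_cl E0 then (C0 \<union> E0) - {Pos v, Neg v} else E0"
    have "{E\<in>DP v F. x \<in> E} \<subseteq> {?e}"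
    proof (intro subsetI)
      fix E assume "E \<in> {E\<in>DP v F. x \<in> E}"
      then have E: "E \<in> DP v F" "x \<in> E" by auto
      from E(1) show "E \<in> {?e}"
      proof (cases rule: dp_cases)
        case 1
        then have "E = E0" using single_uniq[OF E0 1(1) E(2)] by simp
        then show ?thesis using 1 by simp
      next
        case (2 D)
        have "x \<in> D" using E(2) False unfolding 2(1) res_mem by blast
        then have "D = E0" using single_uniq[OF E0 2(2)] by simp
        moreover have "v \<in> var_cl D" using var_s[OF 2(3)] sv by simp
        ultimately show ?thesis using 2(1) by simp
      qed
    qed
    then show ?thesis by blast
  next
    case True
    with alt have "ldeg F (comp s) = 1" by blast
    then obtain D1 where D1: "{C\<in>F. comp s \<in> C} = {D1}" using ldeg1_uniq by blast
    have "{E\<in>DP v F. x \<in> E} \<subseteq> {(C0 \<union> D1) - {Pos v, Neg v}}"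
    proof (intro subsetI)
      fix E assume "E \<in> {E\<in>DP v F. x \<in> E}"
      then have E: "E \<in> DP v F" "x \<in> E" by auto
      from E(1) show "E \<in> {(C0 \<union> D1) - {Pos v, Neg v}}"
      proof (cases rule: dp_cases)
        case 1
        then have "E = C0" using single_uniq[OF E0 1(1) E(2)] single_uniq[OF E0 C0F True] by simp
        then have "v \<in> var_cl E" using var_s[OF sC0 sv] by simp
        with 1(2) show ?thesis by contradiction
      next
        case (2 D)
        then have "D = D1" using single_uniq[OF D1 2(2) 2(3)] by simp
        then show ?thesis using 2 by simp
      qed
    qed
    then show ?thesis by blast
  qed
  then obtain e where "{E\<in>DP v F. x \<in> E} \<subseteq> {e}" by blast
  then have a: "ldeg (DP v F) x \<le> 1" by (rule ldeg_le1)
  obtain E1 where "E1 \<in> DP v F" "x \<in> E1" using occurs[OF E0F xv] by blast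
  then have b: "1 \<le> ldeg (DP v F) x" using ldeg_pos[OF fin_dp] by blast
  obtain D where D: "D \<in> F" "comp x \<in> D" using MU_nopure[OF mu E0F] by blast
  obtain E2 where "E2 \<in> DP v F" "comp x \<in> E2" using occurs[OF D] xv by auto
  then have c: "1 \<le> ldeg (DP v F) (comp x)" using ldeg_pos[OF fin_dp] by blast
  show ?thesis unfolding singular_lit_iff using min1[OF a b c] .
qed

end

context sing begin

lemma notC0: "D \<in> F \<Longrightarrow> comp s \<in> D \<Longrightarrow> s \<notin> D"
  using MU_clause[OF mu, of D "comp s"] by simp

lemma compsC0: "comp s \<notin> C0" using MU_clause[OF mu C0F sC0] .

lemma lvar_v: "lvar y = v \<Longrightarrow> y = s \<or> y = comp s" using lvar_eq[of y s] sv by simp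

lemma res_clause:
  assumes D: "D \<in> F" "comp s \<in> D" and x: "x \<in> (C0 \<union> D) - {Pos v, Neg v}"
  shows "comp x \<notin> (C0 \<union> D) - {Pos v, Neg v}"
proof
  assume cx: "comp x \<in> (C0 \<union> D) - {Pos v, Neg v}"
  have a: "x \<in> C0 \<or> x \<in> D" "lvar x \<noteq> v" using x unfolding res_mem by auto
  have b: "comp x \<in> C0 \<or> comp x \<in> D" using cx unfolding res_mem by auto
  have r: "C0 \<inter> comp ` D = {s}" using res[OF D] .
  show False
  proof (cases "x \<in> C0")
    case True
    show False
    proof (cases "comp x \<in> C0")
      case True then show False using MU_clause[OF mu C0F \<open>x \<in> C0\<close>] by simp
    next
      case False
      then have "comp x \<in> D" using b by simp
      then have "x \<in> C0 \<inter> comp ` D" using \<open>x \<in> C0\<close> by (simp add: comp_img)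
      then have "x = s" using r by blast
      then show False using a(2) sv by simp
    qed
  next
    case False
    then have "x \<in> D" using a by simp
    show False
    proof (cases "comp x \<in> D")
      case True then show False using MU_clause[OF mu D(1) \<open>x \<in> D\<close>] by simp
    next
      case False
      then have "comp x \<in> C0" using b by simp
      then have "comp x \<in> C0 \<inter> comp ` D" using \<open>x \<in> D\<close> by (simp add: comp_img)
      then have "comp x = s" using r by blast
      then show False using a(2) sv by (metis lvar_comp)
    qed
  qed
qed

lemma dp_unsat: "\<not> satisfiable (DP v F)"
proof
  assume "satisfiable (DP v F)"
  then obtain \<phi> where \<phi>: "\<forall>E\<in>DP v F. \<exists>x\<in>E. lit_val \<phi> x" by (auto simp: satisfiable_def)
  have nov: "\<exists>y\<in>E. lit_val (settrue \<phi> fx) y" if E: "E \<in> F" "v \<notin> var_cl E" and fl: "lvar fx = v" for E fx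
  proof -
    obtain y where y: "y \<in> E" "lit_val \<phi> y" using \<phi> dp_in1[OF E] by blast
    have "lvar y \<noteq> lvar fx" using E(2) y(1) var_s fl by metis
    then have "lit_val (settrue \<phi> fx) y" using y(2) settrue_other by metis
    then show ?thesis using y(1) by blast
  qed
  have "satisfiable F"
  proof (cases "\<exists>z\<in>C0. z \<noteq> s \<and> lit_val \<phi> z")
    case True
    then obtain z where z: "z \<in> C0" "z \<noteq> s" "lit_val \<phi> z" by blast
    have zv: "lvar z \<noteq> v" using lvar_v[of z] z compsC0 by auto
    show ?thesis
    proof (rule satI[of _ "settrue \<phi> (comp s)"], intro ballI)
      fix E assume E: "E \<in> F"
      show "\<exists>y\<in>E. lit_val (settrue \<phi> (comp s)) y"
      proof (cases "v \<in> var_cl E")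
        case False then show ?thesis using nov[OF E False, of "comp s"] sv by simp
      next
        case True
        then show ?thesis
        proof (cases rule: v_cases)
          case 1 then have "E = C0" using uniq[OF E] by simp
          have "lit_val (settrue \<phi> (comp s)) z" using z(3) zv sv settrue_other[of z "comp s" \<phi>] by simp
          then show ?thesis using z(1) \<open>E = C0\<close> by blast
        next
          case 2 then show ?thesis using settrue_self by blast
        qed
      qed
    qed
  next
    case False
    show ?thesis
    proof (rule satI[of _ "settrue \<phi> s"], intro ballI)
      fix E assume E: "E \<in> F"
      show "\<exists>y\<in>E. lit_val (settrue \<phi> s) y"
      proof (cases "v \<in> var_cl E")
        case False then show ?thesis using nov[OF E False, of "s"] sv by simp
      next
        case True
        then show ?thesis
        proof (cases rule: v_cases)
          case 1 then show ?thesis using settrue_self by blast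
        next
          case 2
          obtain y where y: "y \<in> (C0 \<union> E) - {Pos v, Neg v}" "lit_val \<phi> y" using \<phi> dp_in2[OF E 2] by blast
          have yv: "lvar y \<noteq> v" using y(1) unfolding res_mem by simp
          have "y \<notin> C0" using False y(2) yv sv by auto
          then have "y \<in> E" using y(1) unfolding res_mem by simp
          moreover have "lit_val (settrue \<phi> s) y" using y(2) yv sv settrue_other[of y s \<phi>] by simp
          ultimately show ?thesis by blast
        qed
      qed
    qed
  qed
  with mu show False by (simp add: MU_unsat)
qed


lemma dp_min: assumes E: "E \<in> DP v F" shows "satisfiable (DP v F - {E})"
  using E
proof (cases rule: dp_cases)
  case 1
  obtain \<phi> where p: "\<forall>D\<in>F. D \<noteq> E \<longrightarrow> (\<exists>x\<in>D. lit_val \<phi> x)" using MU_min[OF mu 1(1)] by blast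
  show ?thesis
  proof (rule satI[of _ \<phi>], intro ballI)
    fix E' assume "E' \<in> DP v F - {E}"
    then have E': "E' \<in> DP v F" "E' \<noteq> E" by auto
    from E'(1) show "\<exists>x\<in>E'. lit_val \<phi> x"
    proof (cases rule: dp_cases)
      case 1 then show ?thesis using p E'(2) by blast
    next
      case (2 D)
      have "C0 \<noteq> E" using var_s[OF sC0 sv] \<open>v \<notin> var_cl E\<close> by auto
      obtain z where z: "z \<in> C0" "lit_val \<phi> z" using p C0F \<open>C0 \<noteq> E\<close> by blast
      have "D \<noteq> E" using var_s[OF 2(3)] sv \<open>v \<notin> var_cl E\<close> by auto
      obtain y where y: "y \<in> D" "lit_val \<phi> y" using p 2(2) \<open>D \<noteq> E\<close> by blast
      show ?thesis
      proof (cases "lvar z = v")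
        case False then have "z \<in> E'" unfolding 2(1) res_mem using z by simp
        then show ?thesis using z(2) by blast
      next
        case True
        then have "z = s" using lvar_v[of z] compsC0 z(1) by auto
        then have "y \<noteq> comp s" using z y by auto
        moreover have "y \<noteq> s" using notC0[OF 2(2,3)] y by auto
        ultimately have "lvar y \<noteq> v" using lvar_v[of y] by auto
        then have "y \<in> E'" unfolding 2(1) res_mem using y by simp
        then show ?thesis using y(2) by blast
      qed
    qed
  qed
next
  case (2 D0)
  note D0 = 2
  obtain \<phi> where p: "\<forall>D\<in>F. D \<noteq> D0 \<longrightarrow> (\<exists>x\<in>D. lit_val \<phi> x)" and f: "\<forall>x\<in>D0. \<not> lit_val \<phi> x"
    using MU_min[OF mu D0(2)] by blast
  have ns: "\<not> lit_val \<phi> (comp s)" using f D0(3) by blast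
  show ?thesis
  proof (rule satI[of _ \<phi>], intro ballI)
    fix E' assume "E' \<in> DP v F - {E}"
    then have E': "E' \<in> DP v F" "E' \<noteq> E" by auto
    from E'(1) show "\<exists>x\<in>E'. lit_val \<phi> x"
    proof (cases rule: dp_cases)
      case 1
      have "E' \<noteq> D0" using var_s[OF D0(3)] sv 1(2) by auto
      then show ?thesis using p 1(1) by blast
    next
      case (2 D)
      have "D \<noteq> D0" using E'(2) 2(1) D0(1) by auto
      obtain y where y: "y \<in> D" "lit_val \<phi> y" using p 2(2) \<open>D \<noteq> D0\<close> by blast
      have "y \<noteq> comp s" using ns y by auto
      moreover have "y \<noteq> s" using notC0[OF 2(2,3)] y by auto
      ultimately have "lvar y \<noteq> v" using lvar_v[of y] by auto
      then have "y \<in> E'" unfolding 2(1) res_mem using y by simp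
      then show ?thesis using y(2) by blast
    qed
  qed
qed

lemma MU_dp: "MU (DP v F)"
  unfolding MU_def
proof (intro conjI ballI dp_unsat dp_min)
  show "is_clause_set (DP v F)"
    unfolding is_clause_set_def
  proof (intro conjI ballI fin_dp)
    fix E assume "E \<in> DP v F"
    then show "is_clause E"
    proof (cases rule: dp_cases)
      case 1 then show ?thesis using mu by (auto simp: MU_def is_clause_set_def)
    next
      case (2 D)
      have "finite (C0 \<union> D)" using MU_cfinite[OF mu C0F] MU_cfinite[OF mu 2(2)] by simp
      then have "finite E" unfolding 2(1) by simp
      then show ?thesis unfolding is_clause_def 2(1) using res_clause[OF 2(2,3)] by (auto simp only: 2(1))
    qed
  qed
qed

end

lemma sat_G_E: assumes "\<forall>D\<in>(G - {E}) \<union> {E \<union> {y}}. \<exists>x\<in>D. lit_val \<phi> x" and "\<not> satisfiable G" and "E \<in> G"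
  shows "lit_val \<phi> y"
proof (rule ccontr)
  assume ny: "\<not> lit_val \<phi> y"
  have "\<forall>D\<in>G. \<exists>x\<in>D. lit_val \<phi> x"
  proof
    fix D assume D: "D \<in> G"
    show "\<exists>x\<in>D. lit_val \<phi> x"
    proof (cases "D = E")
      case True
      then obtain x where "x \<in> E \<union> {y}" "lit_val \<phi> x" using assms(1) by blast
      then show ?thesis using ny True by auto
    next
      case False then show ?thesis using assms(1) D by blast
    qed
  qed
  then show False using assms(2) satI by blast
qed

lemma sat_unfold: assumes "saturated G" "C \<in> G" "lvar y \<in> vars G" "lvar y \<notin> var_cl C"
  obtains \<phi> where "\<forall>D\<in>(G - {C}) \<union> {C \<union> {y}}. \<exists>x\<in>D. lit_val \<phi> x"
proof -
  have "satisfiable ((G - {C}) \<union> {C \<union> {y}})" using assms unfolding saturated_def by blast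
  then show ?thesis using that unfolding satisfiable_def by blast
qed

lemma not_var: assumes "x \<notin> E" "comp x \<notin> E" shows "lvar x \<notin> var_cl E"
proof
  assume "lvar x \<in> var_cl E"
  then obtain z where "z \<in> E" "lvar z = lvar x" by (auto simp: var_cl_iff)
  then show False using lvar_eq[of z x] assms by auto
qed

lemma in_vars: "E \<in> G \<Longrightarrow> x \<in> E \<Longrightarrow> lvar x \<in> vars G"
  unfolding vars_def var_cl_def by blast

lemma sat2:
  assumes sat: "saturated G" and bc: "lvar b \<noteq> lvar c" and eq: "{E\<in>G. b \<in> E} = {E\<in>G. c \<in> E}"
    and E0: "E0 \<in> G" "b \<in> E0"
  shows False
proof -
  have muG: "MU G" using sat by (simp add: saturated_def)
  have iff: "b \<in> E \<longleftrightarrow> c \<in> E" if "E \<in> G" for E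
  proof -
    have "b \<in> E \<longleftrightarrow> E \<in> {E\<in>G. b \<in> E}" using that by simp
    also have "\<dots> \<longleftrightarrow> E \<in> {E\<in>G. c \<in> E}" using eq by simp
    also have "\<dots> \<longleftrightarrow> c \<in> E" using that by simp
    finally show ?thesis .
  qed
  have cE0: "c \<in> E0" using iff[OF E0(1)] E0(2) by simp
  have claim: "comp c \<in> E" if E: "E \<in> G" "comp b \<in> E" for E
  proof (rule ccontr)
    assume nc: "comp c \<notin> E"
    have "b \<notin> E" using MU_clause[OF muG E(1), of b] E(2) by auto
    then have "c \<notin> E" using iff[OF E(1)] by simp
    then have nv: "lvar c \<notin> var_cl E" using not_var nc by blast
    obtain \<phi> where \<phi>: "\<forall>D\<in>(G - {E}) \<union> {E \<union> {c}}. \<exists>x\<in>D. lit_val \<phi> x"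
      using sat_unfold[OF sat E(1) in_vars[OF E0(1) cE0] nv] by blast
    have pc: "lit_val \<phi> c" using sat_G_E[OF \<phi> MU_unsat[OF muG] E(1)] .
    have "satisfiable G"
    proof (rule satI[of _ "settrue \<phi> (comp b)"], intro ballI)
      fix D assume D: "D \<in> G"
      show "\<exists>x\<in>D. lit_val (settrue \<phi> (comp b)) x"
      proof (cases "D = E")
        case True then show ?thesis using E(2) settrue_self by blast
      next
        case False
        then obtain x where x: "x \<in> D" "lit_val \<phi> x" using \<phi> D by blast
        show ?thesis
        proof (cases "lvar x = lvar b")
          case False
          then have "lit_val (settrue \<phi> (comp b)) x" using x(2) settrue_other[of x "comp b"] by simp
          then show ?thesis using x(1) by blast
        next
          case True
          then consider "x = b" | "x = comp b" using lvar_eq by blast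
          then show ?thesis
          proof cases
            case 1
            then have "c \<in> D" using iff[OF D] x(1) by simp
            moreover have "lit_val (settrue \<phi> (comp b)) c" using pc bc settrue_other[of c "comp b"] by simp
            ultimately show ?thesis by blast
          next
            case 2 then show ?thesis using x(1) settrue_self by blast
          qed
        qed
      qed
    qed
    then show False using MU_unsat[OF muG] by simp
  qed
  obtain \<phi> where p: "\<forall>D\<in>G. D \<noteq> E0 \<longrightarrow> (\<exists>x\<in>D. lit_val \<phi> x)" and f: "\<forall>x\<in>E0. \<not> lit_val \<phi> x"
    using MU_min[OF muG E0(1)] by blast
  have nc: "\<not> lit_val \<phi> c" using f cE0 by blast
  have "satisfiable G"
  proof (rule satI[of _ "settrue \<phi> b"], intro ballI)
    fix D assume D: "D \<in> G"
    show "\<exists>x\<in>D. lit_val (settrue \<phi> b) x"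
    proof (cases "D = E0")
      case True then show ?thesis using E0(2) settrue_self by blast
    next
      case False
      then obtain x where x: "x \<in> D" "lit_val \<phi> x" using p D by blast
      show ?thesis
      proof (cases "lvar x = lvar b")
        case False
        then have "lit_val (settrue \<phi> b) x" using x(2) settrue_other[of x b] by simp
        then show ?thesis using x(1) by blast
      next
        case True
        then consider "x = b" | "x = comp b" using lvar_eq by blast
        then show ?thesis
        proof cases
          case 1 then show ?thesis using x(1) settrue_self by blast
        next
          case 2
          then have "comp c \<in> D" using claim[OF D] x(1) by simp
          moreover have "lit_val (settrue \<phi> b) (comp c)" using nc bc settrue_other[of "comp c" b] by simp
          ultimately show ?thesis by blast
        qed
      qed
    qed
  qed
  then show False using MU_unsat[OF muG] by simp
qed

locale two =
  fixes F :: "'v cls" and s t :: "'v lit" and C0 :: "'v clause" and v w :: 'v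
  assumes mu: "MU F" and C0s: "{C\<in>F. s \<in> C} = {C0}" and C0t: "{C\<in>F. t \<in> C} = {C0}"
    and sv: "lvar s = v" and tw: "lvar t = w" and vw: "v \<noteq> w"
begin

sublocale S: sing F s C0 v by unfold_locales (rule mu C0s sv)+
sublocale T: sing F t C0 w by unfold_locales (rule mu C0t tw)+

lemma swapped: "two F t s C0 w v"
  by unfold_locales (use mu C0s C0t sv tw vw in auto)

lemma neqs: "s \<noteq> t" "s \<noteq> comp t" "comp s \<noteq> t" "comp s \<noteq> comp t"
  using sv tw vw by (metis lvar_comp)+

lemma Bfacts: assumes "B \<in> F" "comp t \<in> B" shows "s \<notin> B" "comp s \<notin> B" "t \<notin> B"
proof -
  show "t \<notin> B" using T.notC0[OF assms] .
  show "s \<notin> B"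
  proof
    assume "s \<in> B" then have "B = C0" using S.uniq assms(1) by simp
    then show False using T.compsC0 assms(2) by simp
  qed
  show "comp s \<notin> B"
  proof
    assume "comp s \<in> B"
    then have "s \<in> C0 \<inter> comp ` B" using S.sC0 by (simp add: comp_img)
    then have "s = t" using T.res[OF assms] by blast
    then show False using neqs by simp
  qed
qed

lemma satR:
  assumes sat: "saturated (DP v F)" and B: "B \<in> F" "comp t \<in> B" and r: "r \<in> C0" "r \<noteq> s" "r \<noteq> t"
  shows "r \<in> B"
proof (rule ccontr)
  assume nr: "r \<notin> B"
  let ?G = "DP v F"
  have rv: "lvar r \<noteq> v" using S.lvar_v[of r] r S.compsC0 by auto
  have rw: "lvar r \<noteq> w" using T.lvar_v[of r] r T.compsC0 by auto
  have Bv: "v \<notin> var_cl B"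
  proof
    assume "v \<in> var_cl B"
    then show False
    proof (cases rule: S.v_cases)
      case 1 then show False using Bfacts[OF B] by simp
    next
      case 2 then show False using Bfacts[OF B] by simp
    qed
  qed
  have BG: "B \<in> ?G" using S.dp_in1[OF B(1) Bv] .
  have ncr: "comp r \<notin> B"
  proof
    assume "comp r \<in> B"
    then have "r \<in> C0 \<inter> comp ` B" using r(1) by (simp add: comp_img)
    then have "r = t" using T.res[OF B] by blast
    then show False using r by simp
  qed
  have nv: "lvar r \<notin> var_cl B" using not_var nr ncr by blast
  obtain E1 where E1: "E1 \<in> ?G" "r \<in> E1" using S.occurs[OF S.C0F r(1) rv] by blast
  obtain \<phi> where \<phi>: "\<forall>D\<in>(?G - {B}) \<union> {B \<union> {r}}. \<exists>x\<in>D. lit_val \<phi> x"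
    using sat_unfold[OF sat BG in_vars[OF E1] nv] by blast
  have pr: "lit_val \<phi> r" using sat_G_E[OF \<phi> S.dp_unsat BG] .
  have tE: "r \<in> E" if E: "E \<in> ?G" "t \<in> E" for E
    using E(1)
  proof (cases rule: S.dp_cases)
    case 1
    then have "E = C0" using T.uniq E(2) by simp
    then show ?thesis using 1(2) S.var_s[OF S.sC0 sv] by simp
  next
    case (2 D)
    show ?thesis unfolding 2(1) res_mem using r(1) rv by simp
  qed
  have "satisfiable ?G"
  proof (rule satI[of _ "settrue \<phi> (comp t)"], intro ballI)
    fix D assume D: "D \<in> ?G"
    show "\<exists>x\<in>D. lit_val (settrue \<phi> (comp t)) x"
    proof (cases "D = B")
      case True then show ?thesis using B(2) settrue_self by blast
    next
      case False
      then obtain x where x: "x \<in> D" "lit_val \<phi> x" using \<phi> D by blast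
      show ?thesis
      proof (cases "lvar x = w")
        case False
        then have "lit_val (settrue \<phi> (comp t)) x" using x(2) settrue_other[of x "comp t"] tw by simp
        then show ?thesis using x(1) by blast
      next
        case True
        then consider "x = t" | "x = comp t" using T.lvar_v by blast
        then show ?thesis
        proof cases
          case 1
          then have "r \<in> D" using tE[OF D] x(1) by simp
          moreover have "lit_val (settrue \<phi> (comp t)) r" using pr rw tw settrue_other[of r "comp t"] by simp
          ultimately show ?thesis by blast
        next
          case 2 then show ?thesis using x(1) settrue_self by blast
        qed
      qed
    qed
  qed
  then show False using S.dp_unsat by simp
qed

end

definition swp :: "'v lit \<Rightarrow> 'v lit \<Rightarrow> 'v lit \<Rightarrow> 'v lit" where
  "swp s t x = (if x = s then comp t else if x = comp s then t else if x = t then comp s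
      else if x = comp t then s else x)"

context two begin

abbreviation f where "f \<equiv> swp s t"

lemma f_s[simp]: "f s = comp t" by (simp add: swp_def)
lemma f_cs[simp]: "f (comp s) = t" using neqs by (simp add: swp_def)
lemma f_t[simp]: "f t = comp s" using neqs by (simp add: swp_def)
lemma f_ct[simp]: "f (comp t) = s" using neqs by (simp add: swp_def)
lemma f_o: "x \<noteq> s \<Longrightarrow> x \<noteq> comp s \<Longrightarrow> x \<noteq> t \<Longrightarrow> x \<noteq> comp t \<Longrightarrow> f x = x" by (simp add: swp_def)

lemma f_cases:
  obtains "x = s" | "x = comp s" | "x = t" | "x = comp t"
    | "x \<noteq> s" "x \<noteq> comp s" "x \<noteq> t" "x \<noteq> comp t" "f x = x"
  using f_o by blast

lemma f_invol[simp]: "f (f x) = x"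
  by (cases x rule: f_cases) auto

lemma f_comp: "f (comp x) = comp (f x)"
proof (cases x rule: f_cases)
  case 5
  then have "comp x \<noteq> s" "comp x \<noteq> comp s" "comp x \<noteq> t" "comp x \<noteq> comp t"
    by (metis comp_comp)+
  then show ?thesis using 5 f_o by simp
qed auto

lemma f_img: "x \<in> f ` E \<longleftrightarrow> f x \<in> E"
  by (metis f_invol image_iff)

lemma f_img2: "f ` f ` E = E"
  by (simp add: image_image)

lemma Dfacts: assumes "D \<in> F" "comp s \<in> D" shows "t \<notin> D" "comp t \<notin> D" "s \<notin> D"
  using two.Bfacts[OF swapped assms] by auto

lemma I1: assumes B: "B \<in> F" "comp t \<in> B" and R: "C0 - {s,t} \<subseteq> B"
  shows "f ` B = (C0 \<union> B) - {Pos w, Neg w}"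
proof (rule set_eqI)
  fix x
  have bf: "s \<notin> B" "comp s \<notin> B" "t \<notin> B" using Bfacts[OF B] by auto
  have e1: "x \<in> f ` B \<longleftrightarrow> f x \<in> B" by (rule f_img)
  have e2: "x \<in> (C0 \<union> B) - {Pos w, Neg w} \<longleftrightarrow> (x \<in> C0 \<or> x \<in> B) \<and> lvar x \<noteq> w" by (rule res_mem)
  have "f x \<in> B \<longleftrightarrow> (x \<in> C0 \<or> x \<in> B) \<and> lvar x \<noteq> w"
  proof (cases x rule: f_cases)
    case 1 then show ?thesis using B S.sC0 sv tw vw by simp
  next
    case 2 then show ?thesis using bf S.compsC0 by simp
  next
    case 3 then show ?thesis using bf tw by simp
  next
    case 4 then show ?thesis using bf tw by simp
  next
    case 5
    have "lvar x \<noteq> w" using T.lvar_v[of x] 5 by auto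
    moreover have "x \<in> C0 \<Longrightarrow> x \<in> B" using R 5 by blast
    ultimately show ?thesis using 5 by auto
  qed
  then show "x \<in> f ` B \<longleftrightarrow> x \<in> (C0 \<union> B) - {Pos w, Neg w}" using e1 e2 by simp
qed

lemma I2: assumes D: "D \<in> F" "comp s \<in> D"
  shows "f ` ((C0 \<union> D) - {Pos v, Neg v}) = D \<union> (C0 - {s,t})"
proof (rule set_eqI)
  fix x
  have df: "t \<notin> D" "comp t \<notin> D" "s \<notin> D" using Dfacts[OF D] by auto
  have e1: "x \<in> f ` ((C0 \<union> D) - {Pos v, Neg v}) \<longleftrightarrow> f x \<in> (C0 \<union> D) - {Pos v, Neg v}" by (rule f_img)
  have e2: "f x \<in> (C0 \<union> D) - {Pos v, Neg v} \<longleftrightarrow> (f x \<in> C0 \<or> f x \<in> D) \<and> lvar (f x) \<noteq> v" by (rule res_mem)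
  have "(f x \<in> C0 \<or> f x \<in> D) \<and> lvar (f x) \<noteq> v \<longleftrightarrow> x \<in> D \<union> (C0 - {s,t})"
  proof (cases x rule: f_cases)
    case 1 then show ?thesis using df T.compsC0 by simp
  next
    case 2 then show ?thesis using D T.sC0 sv tw vw by simp
  next
    case 3 then show ?thesis using df sv by simp
  next
    case 4 then show ?thesis using df sv T.compsC0 by simp
  next
    case 5
    have "lvar x \<noteq> v" using S.lvar_v[of x] 5 by auto
    then show ?thesis using 5 by auto
  qed
  then show "x \<in> f ` ((C0 \<union> D) - {Pos v, Neg v}) \<longleftrightarrow> x \<in> D \<union> (C0 - {s,t})" using e1 e2 by simp
qed

lemma I3: assumes "s \<notin> E" "comp s \<notin> E" "t \<notin> E" "comp t \<notin> E" shows "f ` E = E"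
proof (rule set_eqI)
  fix x show "x \<in> f ` E \<longleftrightarrow> x \<in> E"
    unfolding f_img by (cases x rule: f_cases) (use assms in auto)
qed

definition h :: "'v clause \<Rightarrow> 'v clause" where
  "h E = (if comp s \<in> E then E \<union> (C0 - {s,t}) else E)"

lemma h_id: "comp s \<notin> E \<Longrightarrow> h E = E" by (simp add: h_def)
lemma h_add: "comp s \<in> E \<Longrightarrow> h E = E \<union> (C0 - {s,t})" by (simp add: h_def)

lemma key:
  assumes hB: "\<forall>B\<in>F. comp t \<in> B \<longrightarrow> C0 - {s,t} \<subseteq> B"
  shows "(\<lambda>E. f ` E) ` DP v F = h ` DP w F"
proof (intro equalityI subsetI)
  fix X assume "X \<in> (\<lambda>E. f ` E) ` DP v F"
  then obtain E where E: "E \<in> DP v F" "X = f ` E" by blast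
  from E(1) show "X \<in> h ` DP w F"
  proof (cases rule: S.dp_cases)
    case 1
    have ns: "s \<notin> E" "comp s \<notin> E" using 1(2) S.var_s sv by auto
    show ?thesis
    proof (cases "comp t \<in> E")
      case True
      have E'w: "(C0 \<union> E) - {Pos w, Neg w} \<in> DP w F" using T.dp_in2[OF 1(1) True] .
      have "comp s \<notin> (C0 \<union> E) - {Pos w, Neg w}" unfolding res_mem using ns S.compsC0 by simp
      then have "h ((C0 \<union> E) - {Pos w, Neg w}) = (C0 \<union> E) - {Pos w, Neg w}" by (rule h_id)
      moreover have "X = (C0 \<union> E) - {Pos w, Neg w}" using I1[OF 1(1) True] hB 1(1) True E(2) by simp
      ultimately show ?thesis using E'w by (metis image_eqI)
    next
      case False
      have "t \<notin> E"
      proof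
        assume "t \<in> E" then have "E = C0" using T.uniq 1(1) by simp
        then show False using ns S.sC0 by simp
      qed
      then have nw: "w \<notin> var_cl E" using not_var[of t E] False tw by simp
      have "E \<in> DP w F" using T.dp_in1[OF 1(1) nw] .
      moreover have "h E = E" using ns by (simp add: h_id)
      moreover have "X = E" using I3[OF ns \<open>t \<notin> E\<close> False] E(2) by simp
      ultimately show ?thesis by (metis image_eqI)
    qed
  next
    case (2 D)
    have df: "t \<notin> D" "comp t \<notin> D" using Dfacts[OF 2(2,3)] by auto
    then have nw: "w \<notin> var_cl D" using not_var[of t D] tw by simp
    have "D \<in> DP w F" using T.dp_in1[OF 2(2) nw] .
    moreover have "h D = D \<union> (C0 - {s,t})" using 2(3) by (rule h_add)
    moreover have "X = D \<union> (C0 - {s,t})" using I2[OF 2(2,3)] E(2) 2(1) by simp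
    ultimately show ?thesis by (metis image_eqI)
  qed
next
  fix X assume "X \<in> h ` DP w F"
  then obtain E where E: "E \<in> DP w F" "X = h E" by blast
  from E(1) show "X \<in> (\<lambda>E. f ` E) ` DP v F"
  proof (cases rule: T.dp_cases)
    case 1
    have nt: "t \<notin> E" "comp t \<notin> E" using 1(2) T.var_s tw by auto
    show ?thesis
    proof (cases "comp s \<in> E")
      case True
      have "(C0 \<union> E) - {Pos v, Neg v} \<in> DP v F" using S.dp_in2[OF 1(1) True] .
      moreover have "X = f ` ((C0 \<union> E) - {Pos v, Neg v})" using I2[OF 1(1) True] E(2) h_add[OF True]
        by simp
      ultimately show ?thesis by (metis image_eqI)
    next
      case False
      have "s \<notin> E"
      proof
        assume "s \<in> E" then have "E = C0" using S.uniq 1(1) by simp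
        then show False using nt T.sC0 by simp
      qed
      then have nv: "v \<notin> var_cl E" using not_var[of s E] False sv by simp
      have "E \<in> DP v F" using S.dp_in1[OF 1(1) nv] .
      moreover have "X = f ` E" using I3[OF \<open>s \<notin> E\<close> False nt] E(2) h_id[OF False] by simp
      ultimately show ?thesis by (metis image_eqI)
    qed
  next
    case (2 B)
    have bf: "s \<notin> B" "comp s \<notin> B" using Bfacts[OF 2(2,3)] by auto
    then have nv: "v \<notin> var_cl B" using not_var[of s B] sv by simp
    have "B \<in> DP v F" using S.dp_in1[OF 2(2) nv] .
    moreover have "comp s \<notin> E" unfolding 2(1) res_mem using bf S.compsC0 by simp
    then have "X = f ` B" using I1[OF 2(2,3)] hB 2(2,3) E(2) 2(1) h_id by simp
    ultimately show ?thesis by (metis image_eqI)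
  qed
qed

end

lemma ldeg_img_le:
  assumes fin: "finite G" and sub: "\<forall>E\<in>G. E \<subseteq> hh E \<and> hh E \<subseteq> E \<union> R" and x: "x \<notin> R"
  shows "ldeg (hh ` G) x \<le> ldeg G x"
proof -
  have "{E'\<in>hh ` G. x \<in> E'} \<subseteq> hh ` {E\<in>G. x \<in> E}"
  proof
    fix E' assume "E' \<in> {E'\<in>hh ` G. x \<in> E'}"
    then obtain E where E: "E \<in> G" "E' = hh E" "x \<in> hh E" by blast
    then have "x \<in> E" using sub x by blast
    then show "E' \<in> hh ` {E\<in>G. x \<in> E}" using E by blast
  qed
  then have "card {E'\<in>hh ` G. x \<in> E'} \<le> card (hh ` {E\<in>G. x \<in> E})"
    by (rule card_mono[rotated]) (use fin in simp)
  also have "\<dots> \<le> card {E\<in>G. x \<in> E}" by (rule card_image_le) (use fin in simp)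
  finally show ?thesis by (simp add: ldeg_def)
qed

lemma ldeg_img_pos:
  assumes fin: "finite G" and sub: "\<forall>E\<in>G. E \<subseteq> hh E" and x: "1 \<le> ldeg G x"
  shows "1 \<le> ldeg (hh ` G) x"
proof -
  obtain E where "E \<in> G" "x \<in> E" using ldeg_ge1[OF x] by blast
  then have "hh E \<in> hh ` G" "x \<in> hh E" using sub by auto
  then show ?thesis using ldeg_pos[of "hh ` G"] fin by blast
qed

lemma nonsing_transfer:
  assumes fin: "finite G" and sub: "\<forall>E\<in>G. E \<subseteq> hh E \<and> hh E \<subseteq> E \<union> R"
    and Rc: "\<forall>r\<in>R. comp r \<notin> R" and R2: "\<forall>r\<in>R. 2 \<le> ldeg G r" and ns: "nonsingular (hh ` G)"
  shows "nonsingular G"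
  unfolding nonsingular_def
proof (intro allI notI)
  fix u assume su: "singular G u"
  let ?p = "Pos u"
  have m: "min (ldeg G ?p) (ldeg G (comp ?p)) = 1" using su singular_lit_iff[of G ?p] by simp
  have m': "min (ldeg (hh ` G) ?p) (ldeg (hh ` G) (comp ?p)) \<noteq> 1"
    using ns singular_lit_iff[of "hh ` G" ?p] by (simp add: nonsingular_def)
  have sub1: "\<forall>E\<in>G. E \<subseteq> hh E" using sub by blast
  have A2: "1 \<le> ldeg (hh ` G) ?p" if "1 \<le> ldeg G ?p" using ldeg_img_pos[OF fin sub1 that] .
  have B2: "1 \<le> ldeg (hh ` G) (comp ?p)" if "1 \<le> ldeg G (comp ?p)" using ldeg_img_pos[OF fin sub1 that] .
  have a1: "1 \<le> ldeg G ?p" "1 \<le> ldeg G (comp ?p)" using m by (auto simp: min_def split: if_splits)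
  have a2: "1 \<le> ldeg (hh ` G) ?p" "1 \<le> ldeg (hh ` G) (comp ?p)" using A2 B2 a1 by auto
  consider "?p \<in> R" | "comp ?p \<in> R" | "?p \<notin> R" "comp ?p \<notin> R" by blast
  then show False
  proof cases
    case 1
    then have "comp ?p \<notin> R" using Rc by blast
    then have "ldeg (hh ` G) (comp ?p) \<le> ldeg G (comp ?p)" using ldeg_img_le[OF fin sub] by blast
    moreover have "2 \<le> ldeg G ?p" using R2 1 by blast
    ultimately show False using m m' a2 by (auto simp: min_def split: if_splits)
  next
    case 2
    then have "?p \<notin> R" using Rc by force
    then have "ldeg (hh ` G) ?p \<le> ldeg G ?p" using ldeg_img_le[OF fin sub] by blast
    moreover have "2 \<le> ldeg G (comp ?p)" using R2 2 by blast
    ultimately show False using m m' a2 by (auto simp: min_def split: if_splits)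
  next
    case 3
    then have "ldeg (hh ` G) ?p \<le> ldeg G ?p" "ldeg (hh ` G) (comp ?p) \<le> ldeg G (comp ?p)"
      using ldeg_img_le[OF fin sub] by blast+
    then show False using m m' a2 by (auto simp: min_def split: if_splits)
  qed
qed

context two begin

lemma f_inj: "inj_on (\<lambda>E. f ` E) X"
  by (rule inj_onI) (metis f_img2)

lemma ldeg_f: "ldeg ((\<lambda>E. f ` E) ` G0) x = ldeg G0 (f x)"
proof -
  have "{E'\<in>(\<lambda>E. f ` E) ` G0. x \<in> E'} = (\<lambda>E. f ` E) ` {E\<in>G0. f x \<in> E}"
    using f_img by auto
  then show ?thesis unfolding ldeg_def using card_image[OF f_inj] by simp
qed

lemma f_nonsing: assumes "nonsingular G0" shows "nonsingular ((\<lambda>E. f ` E) ` G0)"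
  unfolding nonsingular_def
proof (intro allI notI)
  fix u assume "singular ((\<lambda>E. f ` E) ` G0) u"
  then have "min (ldeg G0 (f (Pos u))) (ldeg G0 (f (comp (Pos u)))) = 1"
    using singular_lit_iff[of _ "Pos u"] ldeg_f by simp
  then have "singular G0 (lvar (f (Pos u)))" unfolding singular_lit_iff f_comp .
  then show False using assms by (simp add: nonsingular_def)
qed

lemma dpw_nonsing:
  assumes hB: "\<forall>B\<in>F. comp t \<in> B \<longrightarrow> C0 - {s,t} \<subseteq> B" and nsv: "nonsingular (DP v F)"
  shows "nonsingular (DP w F)"
proof -
  let ?G = "DP w F" and ?R = "C0 - {s,t}"
  have G': "h ` ?G = (\<lambda>E. f ` E) ` DP v F" using key[OF hB] by simp
  have ns': "nonsingular (h ` ?G)" unfolding G' using f_nonsing[OF nsv] .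
  have sub: "\<forall>E\<in>?G. E \<subseteq> h E \<and> h E \<subseteq> E \<union> ?R" by (auto simp: h_def)
  have Rc: "\<forall>r\<in>?R. comp r \<notin> ?R" using MU_clause[OF mu S.C0F] by blast
  have fin: "finite ?G" using T.fin_dp .
  have sw: "lvar s \<noteq> w" using sv vw by simp
  have s1: "1 \<le> ldeg ?G s"
  proof -
    obtain E where "E \<in> ?G" "s \<in> E" using T.occurs[OF S.C0F S.sC0 sw] by blast
    then show ?thesis using ldeg_pos[OF fin] by blast
  qed
  have cs1: "1 \<le> ldeg ?G (comp s)"
  proof -
    obtain A where A: "A \<in> F" "comp s \<in> A" using MU_nopure[OF mu S.C0F S.sC0] by blast
    obtain E where "E \<in> ?G" "comp s \<in> E" using T.occurs[OF A] sw by auto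
    then show ?thesis using ldeg_pos[OF fin] by blast
  qed
  have s1': "1 \<le> ldeg (h ` ?G) s" using ldeg_img_pos[OF fin _ s1] sub by blast
  have cs1': "1 \<le> ldeg (h ` ?G) (comp s)" using ldeg_img_pos[OF fin _ cs1] sub by blast
  have "min (ldeg (h ` ?G) s) (ldeg (h ` ?G) (comp s)) \<noteq> 1"
    using ns' singular_lit_iff[of "h ` ?G" s] by (simp add: nonsingular_def)
  then have s2': "2 \<le> ldeg (h ` ?G) s" using s1' cs1' by (auto simp: min_def split: if_splits)
  have "s \<notin> ?R" by simp
  then have s2: "2 \<le> ldeg ?G s" using ldeg_img_le[OF fin sub] s2' by (meson le_trans)
  have R2: "\<forall>r\<in>?R. 2 \<le> ldeg ?G r"
  proof
    fix r assume r: "r \<in> ?R"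
    have rw: "lvar r \<noteq> w" using T.lvar_v[of r] r T.compsC0 by auto
    have "{E\<in>?G. s \<in> E} \<subseteq> {E\<in>?G. r \<in> E}"
    proof
      fix E assume "E \<in> {E\<in>?G. s \<in> E}"
      then have E: "E \<in> ?G" "s \<in> E" by auto
      from E(1) show "E \<in> {E\<in>?G. r \<in> E}"
      proof (cases rule: T.dp_cases)
        case 1
        then have "E = C0" using S.uniq E(2) by simp
        then show ?thesis using 1(2) T.var_s[OF T.sC0 tw] by simp
      next
        case (2 B)
        have "r \<in> E" unfolding 2(1) res_mem using r rw by simp
        then show ?thesis using E(1) by simp
      qed
    qed
    then have "ldeg ?G s \<le> ldeg ?G r" unfolding ldeg_def by (rule card_mono[rotated]) (use fin in simp)
    then show "2 \<le> ldeg ?G r" using s2 by simp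
  qed
  show ?thesis using nonsing_transfer[OF fin sub Rc R2 ns'] .
qed

lemma iso_vw:
  assumes hB: "\<forall>B\<in>F. comp t \<in> B \<longrightarrow> C0 - {s,t} \<subseteq> B"
    and hA: "\<forall>A\<in>F. comp s \<in> A \<longrightarrow> C0 - {s,t} \<subseteq> A"
  shows "(\<lambda>E. f ` E) ` DP v F = DP w F"
proof -
  have "h ` DP w F = DP w F"
  proof -
    have "h E = E" if E: "E \<in> DP w F" for E
    proof (cases "comp s \<in> E")
      case False then show ?thesis by (rule h_id)
    next
      case True
      from E show ?thesis
      proof (cases rule: T.dp_cases)
        case 1 then show ?thesis using hA True h_add[OF True] by blast
      next
        case (2 B)
        have "comp s \<notin> E" unfolding 2(1) res_mem using Bfacts[OF 2(2,3)] S.compsC0 by simp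
        then show ?thesis using True by simp
      qed
    qed
    then show ?thesis by simp
  qed
  then show ?thesis using key[OF hB] by simp
qed

lemma f_bij: "bij f"
  by (metis bijI' f_invol)

lemma iso_both:
  assumes "(\<lambda>E. f ` E) ` DP v F = DP w F"
  shows "isomorphic (DP v F) (DP w F)" "isomorphic (DP w F) (DP v F)"
proof -
  show "isomorphic (DP v F) (DP w F)" unfolding isomorphic_def using f_bij f_comp assms by blast
  have "(\<lambda>E. f ` E) ` DP w F = DP v F" unfolding assms[symmetric] image_image f_img2 by simp
  then show "isomorphic (DP w F) (DP v F)" unfolding isomorphic_def using f_bij f_comp by blast
qed

end


lemma one_sing_iff: "one_singular G (lvar x) \<longleftrightarrow> ldeg G x = 1 \<and> ldeg G (comp x) = 1"
  by (cases x) (auto simp: one_singular_def)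

lemma two_elems: assumes "2 \<le> card A" obtains a b where "a \<in> A" "b \<in> A" "a \<noteq> b"
proof -
  have fin: "finite A" using assms by (metis card.infinite not_numeral_le_zero)
  have "A \<noteq> {}" using assms by auto
  then obtain a where a: "a \<in> A" by blast
  show thesis
  proof (cases "\<exists>b\<in>A. b \<noteq> a")
    case True then show ?thesis using a that by blast
  next
    case False
    then have "A \<subseteq> {a}" by blast
    then have "card A \<le> 1" using card_mono[of "{a}" A] by simp
    then show ?thesis using assms by simp
  qed
qed

lemma iso_refl: "isomorphic G G"
  unfolding isomorphic_def by (intro exI[of _ id]) simp

lemma reach1:
  assumes "sdp_reach F0 G" "F0 = F" "\<forall>u. singular F u \<longrightarrow> u = v" "nonsingular (DP v F)"
  shows "G = F \<or> G = DP v F"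
  using assms(1,2)
proof induction
  case (refl X) then show ?case by simp
next
  case (step X H u)
  then have "H = F \<or> H = DP v F" by simp
  then show ?case
  proof
    assume "H = F" then show ?thesis using step assms(3) by simp
  next
    assume "H = DP v F" then show ?thesis using step assms(4) by (auto simp: nonsingular_def)
  qed
qed

lemma reach2:
  assumes "sdp_reach F0 G" "F0 = F" "\<forall>u. singular F u \<longrightarrow> u = v \<or> u = w"
    "nonsingular (DP v F)" "nonsingular (DP w F)"
  shows "G = F \<or> G = DP v F \<or> G = DP w F"
  using assms(1,2)
proof induction
  case (refl X) then show ?case by simp
next
  case (step X H u)
  then have "H = F \<or> H = DP v F \<or> H = DP w F" by simp
  then show ?case
  proof (elim disjE)
    assume "H = F" then show ?thesis using step assms(3) by auto
  next
    assume "H = DP v F" then show ?thesis using step assms(4) by (auto simp: nonsingular_def)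
  next
    assume "H = DP w F" then show ?thesis using step assms(5) by (auto simp: nonsingular_def)
  qed
qed

context sing begin
lemma res_set: assumes x: "x \<in> C0" "lvar x \<noteq> v" "ldeg F x = 1"
  shows "{E\<in>DP v F. x \<in> E} = (\<lambda>D. (C0 \<union> D) - {Pos v, Neg v}) ` {D\<in>F. comp s \<in> D}"
proof (intro equalityI subsetI)
  obtain C1 where C1: "{C\<in>F. x \<in> C} = {C1}" using ldeg1_uniq[OF x(3)] by blast
  have "C0 = C1" using single_uniq[OF C1 C0F x(1)] .
  fix E assume "E \<in> {E\<in>DP v F. x \<in> E}"
  then have E: "E \<in> DP v F" "x \<in> E" by auto
  from E(1) show "E \<in> (\<lambda>D. (C0 \<union> D) - {Pos v, Neg v}) ` {D\<in>F. comp s \<in> D}"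
  proof (cases rule: dp_cases)
    case 1
    then have "E = C0" using single_uniq[OF C1 1(1) E(2)] \<open>C0 = C1\<close> by simp
    then show ?thesis using 1(2) var_s[OF sC0 sv] by simp
  next
    case (2 D) then show ?thesis by blast
  qed
next
  fix E assume "E \<in> (\<lambda>D. (C0 \<union> D) - {Pos v, Neg v}) ` {D\<in>F. comp s \<in> D}"
  then obtain D where D: "D \<in> F" "comp s \<in> D" "E = (C0 \<union> D) - {Pos v, Neg v}" by blast
  have "x \<in> E" unfolding D(3) res_mem using x by simp
  then show "E \<in> {E\<in>DP v F. x \<in> E}" using dp_in2[OF D(1,2)] D(3) by simp
qed
end

theorem corollary69:
  fixes F :: "'v cls"
  assumes "MU F" and "singind F = 1"
  shows "(card (singular_vars F) \<ge> 2 \<longrightarrow>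
            (\<forall>v\<in>singular_vars F. non_one_singular F v)
          \<and> (\<exists>C\<in>F. \<forall>x. singular_lit F x \<longrightarrow> x \<in> C)
          \<and> (eventually_saturated F \<longrightarrow> card (singular_vars F) = 2))
       \<and> (eventually_saturated F \<longrightarrow> (\<forall>G\<in>sDP F. \<forall>H\<in>sDP F. isomorphic G H))"
proof -
  have mu: "MU F" by (rule assms(1))
  have ex: "\<exists>vs. maximal_singular_tuple F vs" by (rule ex_max[OF finite_vars[OF mu]])
  have "\<exists>vs. length vs = singind F \<and> maximal_singular_tuple F vs"
    unfolding singind_def by (rule LeastI_ex) (use ex in blast)
  then obtain vs where vs: "length vs = 1" "maximal_singular_tuple F vs" using assms(2) by auto
  then obtain v where "vs = [v]" by (metis One_nat_def length_0_conv length_Suc_conv)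
  then have sv: "singular F v" and nsv: "nonsingular (DP v F)"
    using vs(2) by (simp_all add: maximal_singular_tuple_def DPs_def)
  obtain s where s: "lvar s = v" "ldeg F s = 1" using singular_ex[OF sv] by blast
  obtain C0 where C0: "{C\<in>F. s \<in> C} = {C0}" using ldeg1_uniq[OF s(2)] by blast
  interpret S: sing F s C0 v by unfold_locales (rule mu C0 s(1))+
  have A': "False" if "lvar x \<noteq> v" "ldeg F x = 1" "x \<notin> C0 \<or> ldeg F (comp s) = 1" for x
    using S.lemmaA[OF that] nsv by (simp add: nonsingular_def)
  have inC0: "x \<in> C0" if "lvar x \<noteq> v" "ldeg F x = 1" for x using A'[of x] that by blast
  have sub_vars: "singular_vars F \<subseteq> vars F"
  proof
    fix u assume "u \<in> singular_vars F"
    then have "singular F u" by (simp add: singular_vars_def)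
    then obtain x where x: "lvar x = u" "ldeg F x = 1" using singular_ex[of F u] by blast
    then obtain E where "E \<in> F" "x \<in> E" using ldeg_ge1[of F x] by auto
    then show "u \<in> vars F" using in_vars x(1) by blast
  qed
  have fin_sv: "finite (singular_vars F)" using finite_subset[OF sub_vars finite_vars[OF mu]] .
  have vin: "v \<in> singular_vars F" using sv by (simp add: singular_vars_def)
  have dpv_sDP: "DP v F \<in> sDP F" unfolding sDP_def
    using sdp_reach.step[OF sdp_reach.refl sv] S.MU_dp nsv by blast
  have nw1: "\<not> one_singular F u" if "u \<noteq> v" for u
  proof
    assume "one_singular F u"
    then have d: "ldeg F (Pos u) = 1" "ldeg F (Neg u) = 1" by (auto simp: one_singular_def)
    have "Pos u \<notin> C0 \<or> Neg u \<notin> C0" using MU_clause[OF mu S.C0F, of "Pos u"] by auto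
    then show False
    proof
      assume "Pos u \<notin> C0" then show False using A'[of "Pos u"] d that by simp
    next
      assume "Neg u \<notin> C0" then show False using A'[of "Neg u"] d that by simp
    qed
  qed
  have ab: "(\<forall>u\<in>singular_vars F. non_one_singular F u) \<and> (\<exists>C\<in>F. \<forall>x. singular_lit F x \<longrightarrow> x \<in> C)"
    if c2: "card (singular_vars F) \<ge> 2"
  proof -
    obtain a b where ab: "a \<in> singular_vars F" "b \<in> singular_vars F" "a \<noteq> b" using two_elems[OF c2] by blast
    obtain w where w: "singular F w" "w \<noteq> v"
      using ab by (cases "a = v") (auto simp: singular_vars_def)
    have nv1: "\<not> one_singular F v"
    proof
      assume "one_singular F v"
      then have cs: "ldeg F (comp s) = 1" using one_sing_iff[of F s] s(1) by simp
      obtain x where x: "lvar x = w" "ldeg F x = 1" using singular_ex[OF w(1)] by blast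
      show False using A'[of x] x w(2) cs by simp
    qed
    have a: "\<forall>u\<in>singular_vars F. non_one_singular F u"
    proof
      fix u assume "u \<in> singular_vars F"
      then have "singular F u" by (simp add: singular_vars_def)
      moreover have "\<not> one_singular F u" using nv1 nw1 by (cases "u = v") auto
      ultimately show "non_one_singular F u" by (simp add: non_one_singular_def)
    qed
    have b: "\<forall>x. singular_lit F x \<longrightarrow> x \<in> C0"
    proof (intro allI impI)
      fix x assume "singular_lit F x"
      then have x1: "ldeg F x = 1" by (simp add: singular_lit_def)
      show "x \<in> C0"
      proof (cases "lvar x = v")
        case False then show ?thesis using inC0 x1 by blast
      next
        case True
        then consider "x = s" | "x = comp s" using S.lvar_v by blast
        then show ?thesis
        proof cases
          case 1 then show ?thesis using S.sC0 by simp
        next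
          case 2
          then have "one_singular F v" using one_sing_iff[of F s] s x1 by simp
          then show ?thesis using nv1 by simp
        qed
      qed
    qed
    show ?thesis using a b S.C0F by blast
  qed
  have c: "card (singular_vars F) = 2" if c2: "card (singular_vars F) \<ge> 2" and es: "eventually_saturated F"
  proof (rule ccontr)
    assume "card (singular_vars F) \<noteq> 2"
    then have "card (singular_vars F) \<ge> 3" using c2 by simp
    then have "card (singular_vars F - {v}) \<ge> 2" using vin fin_sv by simp
    then obtain u1 u2 where u: "u1 \<in> singular_vars F - {v}" "u2 \<in> singular_vars F - {v}" "u1 \<noteq> u2"
      by (rule two_elems)
    have "singular F u1" "singular F u2" using u by (auto simp: singular_vars_def)
    then obtain b c where b: "lvar b = u1" "ldeg F b = 1" and c: "lvar c = u2" "ldeg F c = 1"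
      using singular_ex[of F u1] singular_ex[of F u2] by blast
    have bv: "lvar b \<noteq> v" and cv: "lvar c \<noteq> v" using u b c by auto
    have bC: "b \<in> C0" and cC: "c \<in> C0" using inC0 b c bv cv by auto
    have sat: "saturated (DP v F)" using es dpv_sDP by (simp add: eventually_saturated_def)
    have eq: "{E\<in>DP v F. b \<in> E} = {E\<in>DP v F. c \<in> E}"
      using S.res_set[OF bC bv b(2)] S.res_set[OF cC cv c(2)] by simp
    obtain E0 where E0: "E0 \<in> DP v F" "b \<in> E0" using S.occurs[OF S.C0F bC bv] by blast
    show False using sat2[OF sat _ eq E0] u b c by simp
  qed
  have two: "\<forall>G\<in>sDP F. \<forall>H\<in>sDP F. isomorphic G H" if es: "eventually_saturated F"
  proof (cases "\<forall>u. singular F u \<longrightarrow> u = v")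
    case True
    have onlyv: "G = DP v F" if "G \<in> sDP F" for G
    proof -
      have "sdp_reach F G" "nonsingular G" using that by (auto simp: sDP_def)
      then show ?thesis using reach1[OF _ HOL.refl True nsv] sv by (auto simp: nonsingular_def)
    qed
    show ?thesis
    proof (intro ballI)
      fix G H assume "G \<in> sDP F" "H \<in> sDP F"
      then have "G = DP v F" "H = DP v F" using onlyv by blast+
      then show "isomorphic G H" by (simp add: iso_refl)
    qed
  next
    case False
    then obtain w where w: "singular F w" "w \<noteq> v" by blast
    have "{v, w} \<subseteq> singular_vars F" using sv w by (auto simp: singular_vars_def)
    then have "card {v, w} \<le> card (singular_vars F)" by (rule card_mono[OF fin_sv])
    then have c2: "card (singular_vars F) \<ge> 2" using w(2) by simp
    have cc: "card (singular_vars F) = 2" using c[OF c2 es] .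
    have only: "\<forall>u. singular F u \<longrightarrow> u = v \<or> u = w"
    proof (intro allI impI)
      fix u assume su: "singular F u"
      show "u = v \<or> u = w"
      proof (rule ccontr)
        assume "\<not> (u = v \<or> u = w)"
        then have "{v, w, u} \<subseteq> singular_vars F" "card {v, w, u} = 3"
          using sv w su by (auto simp: singular_vars_def)
        then have "card {v, w, u} \<le> card (singular_vars F)" "card {v, w, u} = 3"
          using card_mono[OF fin_sv] by blast+
        then show False using cc by simp
      qed
    qed
    obtain t where t: "lvar t = w" "ldeg F t = 1" using singular_ex[OF w(1)] by blast
    have tC: "t \<in> C0" using inC0 t w(2) by simp
    obtain C1 where C1: "{C\<in>F. t \<in> C} = {C1}" using ldeg1_uniq[OF t(2)] by blast
    have "C0 = C1" using single_uniq[OF C1 S.C0F tC] .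
    then have C0t: "{C\<in>F. t \<in> C} = {C0}" using C1 by simp
    interpret TW: two F s t C0 v w
      by unfold_locales (use mu C0 C0t s(1) t(1) w(2) in auto)
    have satv: "saturated (DP v F)" using es dpv_sDP by (simp add: eventually_saturated_def)
    have hB: "\<forall>B\<in>F. comp t \<in> B \<longrightarrow> C0 - {s,t} \<subseteq> B"
      using TW.satR[OF satv] by blast
    have nsw: "nonsingular (DP w F)" using TW.dpw_nonsing[OF hB nsv] .
    have dpw_sDP: "DP w F \<in> sDP F" unfolding sDP_def
      using sdp_reach.step[OF sdp_reach.refl w(1)] TW.T.MU_dp nsw by blast
    have satw: "saturated (DP w F)" using es dpw_sDP by (simp add: eventually_saturated_def)
    have hA: "\<forall>A\<in>F. comp s \<in> A \<longrightarrow> C0 - {s,t} \<subseteq> A"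
      using two.satR[OF TW.swapped satw] by blast
    have iso: "isomorphic (DP v F) (DP w F)" "isomorphic (DP w F) (DP v F)"
      using TW.iso_both[OF TW.iso_vw[OF hB hA]] by auto
    have mem: "G = DP v F \<or> G = DP w F" if "G \<in> sDP F" for G
    proof -
      have "sdp_reach F G" "nonsingular G" using that by (auto simp: sDP_def)
      then show ?thesis using reach2[OF _ HOL.refl only nsv nsw] sv by (auto simp: nonsingular_def)
    qed
    show ?thesis
    proof (intro ballI)
      fix G H assume "G \<in> sDP F" "H \<in> sDP F"
      then have g: "G = DP v F \<or> G = DP w F" and hh: "H = DP v F \<or> H = DP w F" using mem by blast+
      show "isomorphic G H"
        using g
      proof (elim disjE)
        assume "G = DP v F" then show ?thesis using hh iso iso_refl by (elim disjE) simp_all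
      next
        assume "G = DP w F" then show ?thesis using hh iso iso_refl by (elim disjE) simp_all
      qed
    qed
  qed
  show ?thesis using ab c two by blast
qed

end
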